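(* Under Assumptions A1–A4, with $(\beta_t)$ positive and $\beta_t\to\infty$, the BOKE+ iterates $\bm{X}_t$ satisfy: (i) for a fixed bandwidth $\ell_t\equiv\ell$, $\inf_t h_{\mathcal{X},\bm{X}_t}\le R_\Psi\ell$ almost surely; (ii) there exists a bandwidth sequence $\ell_t\to0$ such that $\inf_t h_{\mathcal{X},\bm{X}_t}=0$ almost surely.
   Context: Standing setup. A1: $\mathcal{X}\subset\mathbb{R}^d$ compact, convex, nonempty interior. A2: $f$ continuous on $\mathcal{X}$. A3: kernel $k(\bm{x},\bm{x}')=\Psi((\bm{x}-\bm{x}')/\ell)$, $\Psi\ge0$ with support in $B(\bm{0},R_\Psi)$, continuous at $\bm{0}$, $\Psi(\bm{0})>0$, $\sup\Psi\le M_\Psi$. A4: independent zero-mean sub-Gaussian noises with parameter $\varsigma$. $W_t(\bm{x})=\sum_ik(\bm{x},\bm{x}_i)$; $m_t$ is kernel regression $\sum_ik(\bm{x},\bm{x}_i)y_i/W_t(\bm{x})$, extended by the nearest-neighbor average where $W_t=0$; $\hat\sigma_t=W_t^{-1/2}$ (with $c/0=\infty$). BOKE+ with parameter $p\in(0,1]$: at each iteration $t\ge T_0$ draw independently $q\sim\mathrm{Bernoulli}(p)$; if $q=1$ set $\bm{x}_{t+1}\in\arg\max_{\mathcal{X}}(m_t+\beta_t\hat\sigma_t)$, otherwise $\bm{x}_{t+1}\in\arg\max_{\mathcal{X}}m_t$; observe $y_{t+1}=f(\bm{x}_{t+1})+\varepsilon_{t+1}$. Fill distance $h_{\mathcal{X},\bm{X}_t}=\sup_{\bm{x}\in\mathcal{X}}\min_{i\le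 t}\|\bm{x}-\bm{x}_i\|$. *)

theory Defs
  imports "HOL-Probability.Probability"
begin

definition Wsum :: "('a::euclidean_space \<Rightarrow> real) \<Rightarrow> real \<Rightarrow> (nat \<Rightarrow> 'a) \<Rightarrow> nat \<Rightarrow> 'a \<Rightarrow> real" where
  "Wsum Psi l xs t x = (\<Sum>i\<in>{1..t}. Psi ((1 / l) *\<^sub>R (x - xs i)))"

definition nn_avg :: "(nat \<Rightarrow> 'a::euclidean_space) \<Rightarrow> (nat \<Rightarrow> real) \<Rightarrow> nat \<Rightarrow> 'a \<Rightarrow> real" where
  "nn_avg xs ys t x =
     (let d = Min ((\<lambda>i. dist x (xs i)) ` {1..t});
          N = {i\<in>{1..t}. dist x (xs i) = d}
      in (\<Sum>i\<in>N. ys i) / real (card N))"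

definition kreg :: "('a::euclidean_space \<Rightarrow> real) \<Rightarrow> real \<Rightarrow> (nat \<Rightarrow> 'a) \<Rightarrow> (nat \<Rightarrow> real) \<Rightarrow> nat \<Rightarrow> 'a \<Rightarrow> real" where
  "kreg Psi l xs ys t x =
     (if Wsum Psi l xs t x = 0 then nn_avg xs ys t x
      else (\<Sum>i\<in>{1..t}. Psi ((1 / l) *\<^sub>R (x - xs i)) * ys i) / Wsum Psi l xs t x)"

definition sigma_hat :: "('a::euclidean_space \<Rightarrow> real) \<Rightarrow> real \<Rightarrow> (nat \<Rightarrow> 'a) \<Rightarrow> nat \<Rightarrow> 'a \<Rightarrow> ereal" where
  "sigma_hat Psi l xs t x =
     (if Wsum Psi l xs t x = 0 then \<infinity> else ereal (1 / sqrt (Wsum Psi l xs t x)))"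

definition ucb :: "('a::euclidean_space \<Rightarrow> real) \<Rightarrow> real \<Rightarrow> real \<Rightarrow> (nat \<Rightarrow> 'a) \<Rightarrow> (nat \<Rightarrow> real) \<Rightarrow> nat \<Rightarrow> 'a \<Rightarrow> ereal" where
  "ucb Psi l b xs ys t x = ereal (kreg Psi l xs ys t x) + ereal b * sigma_hat Psi l xs t x"

definition is_argmax_on :: "'a set \<Rightarrow> ('a \<Rightarrow> 'b::linorder) \<Rightarrow> 'a \<Rightarrow> bool" where
  "is_argmax_on S g z \<longleftrightarrow> z \<in> S \<and> (\<forall>w\<in>S. g w \<le> g z)"

definition fill_distance :: "'a::euclidean_space set \<Rightarrow> (nat \<Rightarrow> 'a) \<Rightarrow> nat \<Rightarrow> real" where
  "fill_distance X xs t = (SUP x\<in>X. Min ((\<lambda>i. dist x (xs i)) ` {1..t}))"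

definition zero_mean_subgaussian :: "'w measure \<Rightarrow> ('w \<Rightarrow> real) \<Rightarrow> real \<Rightarrow> bool" where
  "zero_mean_subgaussian M e s \<longleftrightarrow>
     integrable M e \<and> integral\<^sup>L M e = 0 \<and>
     (\<forall>lam::real. integrable M (\<lambda>w. exp (lam * e w)) \<and>
        integral\<^sup>L M (\<lambda>w. exp (lam * e w)) \<le> exp (lam\<^sup>2 * s\<^sup>2 / 2))"

text \<open>A run of BOKE+ on the probability space M: design points x_1, x_2, ... (x i w),
  Bernoulli coins q_t (t >= T0), noises eps_i (i >= 1), observations
  y_i = f(x_i) + eps_i, initial design x_1..x_T0 in X, bandwidth sequence l.\<close>
definition boke_plus_run ::
  "'w measure \<Rightarrow> 'a::euclidean_space set \<Rightarrow> ('a \<Rightarrow> real) \<Rightarrow> ('a \<Rightarrow> real) \<Rightarrow> real \<Rightarrow> real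
   \<Rightarrow> (nat \<Rightarrow> real) \<Rightarrow> (nat \<Rightarrow> real) \<Rightarrow> nat
   \<Rightarrow> (nat \<Rightarrow> 'w \<Rightarrow> bool) \<Rightarrow> (nat \<Rightarrow> 'w \<Rightarrow> real) \<Rightarrow> (nat \<Rightarrow> 'w \<Rightarrow> 'a) \<Rightarrow> bool" where
  "boke_plus_run M X f Psi vs p beta l T0 q eps x \<longleftrightarrow>
     prob_space M \<and>
     prob_space.indep_vars M (\<lambda>_. borel)
        (\<lambda>j. case j of Inl t \<Rightarrow> (\<lambda>w. of_bool (q t w)) | Inr i \<Rightarrow> eps i)
        (Inl ` {T0..} \<union> Inr ` {1..}) \<and>
     (\<forall>t\<ge>T0. measure M {w\<in>space M. q t w} = p) \<and>
     (\<forall>i\<ge>1. zero_mean_subgaussian M (eps i) vs) \<and>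
     (\<forall>w\<in>space M. \<forall>i\<ge>1. x i w \<in> X) \<and>
     (\<forall>w\<in>space M. \<forall>t\<ge>T0.
        (let xs = (\<lambda>i. x i w); ys = (\<lambda>i. f (x i w) + eps i w) in
         if q t w then is_argmax_on X (ucb Psi (l t) (beta t) xs ys t) (x (Suc t) w)
         else is_argmax_on X (kreg Psi (l t) xs ys t) (x (Suc t) w)))"

end

theory Submission
  imports Defs
begin

lemma noq_prob:
  fixes q :: "nat \<Rightarrow> 'w \<Rightarrow> bool" and eps :: "nat \<Rightarrow> 'w \<Rightarrow> real" and M :: "'w measure" and T0 :: nat
  assumes ps: "prob_space M"
    and ind: "prob_space.indep_vars M (\<lambda>_. borel)
        (\<lambda>j. case j of Inl t \<Rightarrow> (\<lambda>w. of_bool (q t w)) | Inr i \<Rightarrow> eps i)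
        (Inl ` {T0..} \<union> Inr ` {1..})"
    and pr: "\<forall>t\<ge>T0. measure M {w\<in>space M. q t w} = p"
    and J: "finite J" "J \<subseteq> {T0..}"
  shows "{w\<in>space M. \<forall>t\<in>J. \<not> q t w} \<in> sets M \<and> measure M {w\<in>space M. \<forall>t\<in>J. \<not> q t w} = (1-p)^card J"
proof -
  interpret prob_space M by fact
  let ?Y = "(\<lambda>j. case j of Inl t \<Rightarrow> (\<lambda>w. of_bool (q t w)) | Inr i \<Rightarrow> eps i) :: nat+nat \<Rightarrow> _ \<Rightarrow> real"
  from ind have rv: "\<And>j. j \<in> Inl ` {T0..} \<union> Inr ` {1..} \<Longrightarrow> random_variable borel (?Y j)"
    and isd: "indep_sets (\<lambda>j. {?Y j -` A \<inter> space M | A. A \<in> sets borel}) (Inl ` {T0..} \<union> Inr ` {1..})"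
    unfolding indep_vars_def2 by auto
  have ev: "{w\<in>space M. \<not> q t w} = ?Y (Inl t) -` {0} \<inter> space M" for t by auto
  have evs: "{w\<in>space M. \<not> q t w} \<in> sets M" if "t \<ge> T0" for t
    unfolding ev using rv[of "Inl t"] that by (intro measurable_sets) auto
  have pt: "measure M {w\<in>space M. \<not> q t w} = 1 - p" if "t \<ge> T0" for t
  proof -
    have "{w\<in>space M. \<not> q t w} = space M - {w\<in>space M. q t w}" by auto
    moreover have "{w\<in>space M. q t w} \<in> sets M"
    proof -
      have "{w\<in>space M. q t w} = space M - {w\<in>space M. \<not> q t w}" by auto
      then show ?thesis using evs[OF that] by auto
    qed
    ultimately show ?thesis using prob_compl pr that by auto
  qed
  show ?thesis
  proof (cases "J = {}")
    case True
    then show ?thesis by (simp add: prob_space)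
  next
    case False
    have eq: "{w\<in>space M. \<forall>t\<in>J. \<not> q t w} = (\<Inter>j\<in>Inl ` J. ?Y j -` {0} \<inter> space M)"
      using False by auto
    have "prob (\<Inter>j\<in>Inl ` J. ?Y j -` {0} \<inter> space M) = (\<Prod>j\<in>Inl ` J. prob (?Y j -` {0} \<inter> space M))"
      using J False by (intro indep_setsD[OF isd]) auto
    also have "\<dots> = (\<Prod>t\<in>J. prob (?Y (Inl t) -` {0} \<inter> space M))"
      by (subst prod.reindex) (auto simp: inj_on_def)
    also have "\<dots> = (\<Prod>t\<in>J. 1 - p)"
      using J pt ev by (intro prod.cong) auto
    finally have m: "measure M {w\<in>space M. \<forall>t\<in>J. \<not> q t w} = (1-p)^card J" using eq by simp
    have "{w\<in>space M. \<forall>t\<in>J. \<not> q t w} = (\<Inter>t\<in>J. {w\<in>space M. \<not> q t w})" using False by auto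
    also have "\<dots> \<in> sets M" using J False evs by (intro sets.finite_INT) auto
    finally show ?thesis using m by simp
  qed
qed

lemma sep_bound:
  fixes X :: "'a::euclidean_space set"
  assumes "compact X" "e > 0"
  shows "\<exists>N. \<forall>S. finite S \<longrightarrow> S \<subseteq> X \<longrightarrow> (\<forall>a\<in>S. \<forall>b\<in>S. a \<noteq> b \<longrightarrow> e \<le> dist a b) \<longrightarrow> card S \<le> N"
proof -
  have "seq_compact X" using assms(1) compact_imp_seq_compact by blast
  from seq_compact_imp_totally_bounded[OF this, rule_format, of "e/2"] assms(2)
  obtain k where k: "finite k" "X \<subseteq> (\<Union>c\<in>k. ball c (e/2))" by auto
  show ?thesis
  proof (intro exI allI impI)
    fix S assume S: "finite S" "S \<subseteq> X" "\<forall>a\<in>S. \<forall>b\<in>S. a \<noteq> b \<longrightarrow> e \<le> dist a b"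
    define g where "g a = (SOME c. c \<in> k \<and> a \<in> ball c (e/2))" for a
    have g: "g a \<in> k \<and> a \<in> ball (g a) (e/2)" if "a \<in> S" for a
      unfolding g_def by (rule someI_ex) (use that S k in blast)
    have "inj_on g S"
    proof (rule inj_onI, rule ccontr)
      fix a b assume ab: "a \<in> S" "b \<in> S" "g a = g b" "a \<noteq> b"
      have "dist a b \<le> dist a (g a) + dist (g a) b" by (rule dist_triangle)
      also have "\<dots> < e" using g[OF ab(1)] g[OF ab(2)] ab(3) by (simp add: dist_commute)
      finally show False using S(3) ab by force
    qed
    moreover have "g ` S \<subseteq> k" using g by auto
    ultimately show "card S \<le> card k" using k(1) by (metis card_inj_on_le)
  qed
qed

lemma key_step:
  fixes X :: "'a::euclidean_space set" and xs :: "nat \<Rightarrow> 'a"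
  assumes X: "compact X"
    and Psi0: "\<And>z. Psi z \<ge> 0" and supp: "closure {z. Psi z \<noteq> 0} \<subseteq> ball 0 R"
    and dl: "\<And>y. norm y < d \<Longrightarrow> Psi y > 0"
    and l: "l > 0" and b: "b > 0" and t: "t \<ge> 1"
    and xs: "\<And>i. i \<in> {1..t} \<Longrightarrow> xs i \<in> X"
    and am: "is_argmax_on X (ucb Psi l b xs ys t) z"
    and fd: "fill_distance X xs t > R * l"
  shows "\<forall>i\<in>{1..t}. d * l \<le> dist z (xs i)"
proof -
  have fin: "finite ((\<lambda>i. dist x (xs i)) ` {1..t})" "(\<lambda>i. dist x (xs i)) ` {1..t} \<noteq> {}" for x
    using t by auto
  have "X \<noteq> {}" using xs[of 1] t by auto
  obtain B where B: "\<And>x. x \<in> X \<Longrightarrow> norm x \<le> B"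
    using compact_imp_bounded[OF X] unfolding bounded_iff by blast
  have "bdd_above ((\<lambda>x. Min ((\<lambda>i. dist x (xs i)) ` {1..t})) ` X)"
  proof (rule bdd_aboveI2)
    fix x assume x: "x \<in> X"
    have "Min ((\<lambda>i. dist x (xs i)) ` {1..t}) \<le> dist x (xs 1)"
      using t by (intro Min_le) auto
    also have "\<dots> \<le> norm x + norm (xs 1)" by (simp add: dist_norm norm_triangle_ineq4)
    also have "\<dots> \<le> B + B" using B x xs[of 1] t by (intro add_mono) auto
    finally show "Min ((\<lambda>i. dist x (xs i)) ` {1..t}) \<le> 2 * B" by simp
  qed
  then obtain x0 where x0: "x0 \<in> X" "R * l < Min ((\<lambda>i. dist x0 (xs i)) ` {1..t})"
    using fd \<open>X \<noteq> {}\<close> unfolding fill_distance_def by (auto simp: less_cSUP_iff)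
  have far: "R * l < dist x0 (xs i)" if "i \<in> {1..t}" for i
    using x0(2) fin[of x0] that by (simp add: Min_gr_iff)
  have Pz: "Psi ((1 / l) *\<^sub>R (x0 - xs i)) = 0" if "i \<in> {1..t}" for i
  proof (rule ccontr)
    assume "Psi ((1 / l) *\<^sub>R (x0 - xs i)) \<noteq> 0"
    then have "(1 / l) *\<^sub>R (x0 - xs i) \<in> {z. Psi z \<noteq> 0}" by simp
    then have "(1 / l) *\<^sub>R (x0 - xs i) \<in> closure {z. Psi z \<noteq> 0}" by (rule subsetD[OF closure_subset])
    then have "(1 / l) *\<^sub>R (x0 - xs i) \<in> ball 0 R" by (rule subsetD[OF supp])
    then have a: "norm ((1 / l) *\<^sub>R (x0 - xs i)) < R" by simp
    have "norm ((1 / l) *\<^sub>R (x0 - xs i)) = dist x0 (xs i) / l"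
      using l by (simp add: dist_norm)
    then have "dist x0 (xs i) / l < R" using a by simp
    then have "dist x0 (xs i) < R * l" using l by (simp add: pos_divide_less_eq)
    then show False using far[OF that] by simp
  qed
  have W0: "Wsum Psi l xs t x0 = 0" unfolding Wsum_def using Pz by simp
  have "ucb Psi l b xs ys t x0 = \<infinity>" unfolding ucb_def sigma_hat_def using W0 b by simp
  then have "ucb Psi l b xs ys t z = \<infinity>" using am x0(1) unfolding is_argmax_on_def
    by (metis top.extremum_uniqueI top_ereal_def)
  then have Wz: "Wsum Psi l xs t z = 0" unfolding ucb_def sigma_hat_def
    by (cases "Wsum Psi l xs t z = 0") auto
  have allz: "\<forall>i\<in>{1..t}. Psi ((1 / l) *\<^sub>R (z - xs i)) = 0"
    using Wz unfolding Wsum_def by (subst (asm) sum_nonneg_eq_0_iff) (auto intro: Psi0)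
  show ?thesis
  proof (intro ballI)
    fix i assume "i \<in> {1..t}"
    then have "Psi ((1 / l) *\<^sub>R (z - xs i)) = 0" using allz by auto
    then have "\<not> norm ((1 / l) *\<^sub>R (z - xs i)) < d" using dl by (metis less_irrefl)
    moreover have "norm ((1 / l) *\<^sub>R (z - xs i)) = dist z (xs i) / l"
      using l by (simp add: dist_norm)
    ultimately have "d \<le> dist z (xs i) / l" by simp
    then show "d * l \<le> dist z (xs i)" using l by (simp add: pos_le_divide_eq)
  qed
qed

lemma count_bound:
  fixes X :: "'a::euclidean_space set" and xs :: "nat \<Rightarrow> 'a"
  assumes N: "\<forall>S. finite S \<longrightarrow> S \<subseteq> X \<longrightarrow> (\<forall>a\<in>S. \<forall>b\<in>S. a \<noteq> b \<longrightarrow> e \<le> dist a b) \<longrightarrow> card S \<le> N"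
    and e: "e > 0" and T: "finite T"
    and sep: "\<And>t. t \<in> T \<Longrightarrow> \<forall>i\<in>{1..t}. e \<le> dist (xs (Suc t)) (xs i)"
    and inX: "\<And>t. t \<in> T \<Longrightarrow> xs (Suc t) \<in> X"
  shows "card T \<le> N"
proof -
  have sep2: "e \<le> dist (xs (Suc t)) (xs (Suc s))" if "s \<in> T" "t \<in> T" "s < t" for s t
    using sep[OF that(2)] that(3) by auto
  have inj: "inj_on (\<lambda>t. xs (Suc t)) T"
  proof (rule inj_onI, rule ccontr)
    fix s t assume st: "s \<in> T" "t \<in> T" "xs (Suc s) = xs (Suc t)" "s \<noteq> t"
    show False
    proof (cases "s < t")
      case True then show ?thesis using sep2[of s t] st e by auto
    next
      case False then have "t < s" using st by auto
      then show ?thesis using sep2[of t s] st e by auto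
    qed
  qed
  have f3: "\<forall>a\<in>(\<lambda>t. xs (Suc t)) ` T. \<forall>b\<in>(\<lambda>t. xs (Suc t)) ` T. a \<noteq> b \<longrightarrow> e \<le> dist a b"
  proof -
    show "\<forall>a\<in>(\<lambda>t. xs (Suc t)) ` T. \<forall>b\<in>(\<lambda>t. xs (Suc t)) ` T. a \<noteq> b \<longrightarrow> e \<le> dist a b"
    proof (intro ballI impI)
      fix a b assume ab: "a \<in> (\<lambda>t. xs (Suc t)) ` T" "b \<in> (\<lambda>t. xs (Suc t)) ` T" "a \<noteq> b"
      then obtain s t where st: "s \<in> T" "t \<in> T" "a = xs (Suc s)" "b = xs (Suc t)" by auto
      then have "s \<noteq> t" using ab by auto
      then show "e \<le> dist a b"
        using sep2[of s t] sep2[of t s] st by (cases "s < t") (auto simp: dist_commute)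
    qed
  qed
  have fin: "finite ((\<lambda>t. xs (Suc t)) ` T)" using T by simp
  have sub: "(\<lambda>t. xs (Suc t)) ` T \<subseteq> X" using inX by auto
  have "card ((\<lambda>t. xs (Suc t)) ` T) \<le> N"
    by (rule N[THEN spec, THEN mp, THEN mp, THEN mp, OF fin sub f3])
  then show ?thesis using card_image[OF inj] by simp
qed


lemma AE_small:
  fixes B :: "nat \<Rightarrow> 'w set"
  assumes ps: "prob_space M" and B: "\<And>k. B k \<in> sets M"
    and small: "\<And>eps. eps > 0 \<Longrightarrow> \<exists>k. measure M (B k) < eps"
    and sub: "\<And>k. {w\<in>space M. \<not> P w} \<subseteq> B k"
  shows "AE w in M. P w"
proof -
  interpret prob_space M by fact
  let ?N = "\<Inter>k. B k"
  have Ns: "?N \<in> sets M" using B by (metis image_subsetI sets.countable_INT UNIV_not_empty)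
  have "measure M ?N \<le> 0"
  proof (rule field_le_epsilon)
    fix eps :: real assume "eps > 0"
    then obtain k where k: "measure M (B k) < eps" using small by blast
    have "measure M ?N \<le> measure M (B k)" using B by (intro finite_measure_mono) auto
    then show "measure M ?N \<le> 0 + eps" using k by simp
  qed
  then have "measure M ?N = 0" using measure_nonneg[of M ?N] by linarith
  then have "?N \<in> null_sets M" using Ns by (simp add: emeasure_eq_measure null_sets_def)
  moreover have "{w\<in>space M. \<not> P w} \<subseteq> ?N" using sub by blast
  ultimately show ?thesis by (rule AE_I')
qed

lemma fill_bdd:
  fixes X :: "'a::euclidean_space set" and xs :: "nat \<Rightarrow> 'a"
  assumes X: "compact X" and t: "t \<ge> 1" and xs: "\<And>i. i \<in> {1..t} \<Longrightarrow> xs i \<in> X"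
  shows "bdd_above ((\<lambda>x. Min ((\<lambda>i. dist x (xs i)) ` {1..t})) ` X)"
    and "fill_distance X xs t \<ge> 0"
proof -
  obtain B where B: "\<And>x. x \<in> X \<Longrightarrow> norm x \<le> B"
    using compact_imp_bounded[OF X] unfolding bounded_iff by blast
  show bdd: "bdd_above ((\<lambda>x. Min ((\<lambda>i. dist x (xs i)) ` {1..t})) ` X)"
  proof (rule bdd_aboveI2)
    fix x assume x: "x \<in> X"
    have "Min ((\<lambda>i. dist x (xs i)) ` {1..t}) \<le> dist x (xs 1)"
      using t by (intro Min_le) auto
    also have "\<dots> \<le> norm x + norm (xs 1)" by (simp add: dist_norm norm_triangle_ineq4)
    also have "\<dots> \<le> B + B" using B x xs[of 1] t by (intro add_mono) auto
    finally show "Min ((\<lambda>i. dist x (xs i)) ` {1..t}) \<le> 2 * B" by simp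
  qed
  have x1: "xs 1 \<in> X" using xs t by auto
  have "0 \<le> Min ((\<lambda>i. dist (xs 1) (xs i)) ` {1..t})"
    using t by (subst Min_ge_iff) auto
  also have "\<dots> \<le> fill_distance X xs t"
    unfolding fill_distance_def using x1 bdd by (rule cSUP_upper)
  finally show "fill_distance X xs t \<ge> 0" .
qed


lemma part1:
  fixes X :: "'a::euclidean_space set"
    and f :: "'a \<Rightarrow> real"
    and Psi :: "'a \<Rightarrow> real"
    and R_Psi vs p d :: real
    and beta :: "nat \<Rightarrow> real"
    and T0 :: nat
  assumes X: "compact X"
    and Psi0: "\<And>z. Psi z \<ge> 0" and supp: "closure {z. Psi z \<noteq> 0} \<subseteq> ball 0 R_Psi"
    and d: "d > 0" "\<And>y. norm y < d \<Longrightarrow> Psi y > 0"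
    and p: "0 < p" "p \<le> 1"
    and T0: "T0 \<ge> 1"
    and beta: "\<And>t. beta t > 0"
  shows
    "\<forall>l::real. l > 0 \<longrightarrow>
       (\<forall>(M::'w measure) q eps x.
          boke_plus_run M X f Psi vs p beta (\<lambda>_. l) T0 q eps x \<longrightarrow>
          (AE w in M. (INF t\<in>{1..}. fill_distance X (\<lambda>i. x i w) t) \<le> R_Psi * l))"
proof (intro allI impI)
  fix l :: real and M :: "'w measure" and q eps and x :: "nat \<Rightarrow> 'w \<Rightarrow> 'a"
  assume l: "l > 0" and run: "boke_plus_run M X f Psi vs p beta (\<lambda>_. l) T0 q eps x"
  note rd = run[unfolded boke_plus_run_def]
  note ps = rd[THEN conjunct1]
  interpret prob_space M by fact
  note ind = rd[THEN conjunct2, THEN conjunct1]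
  note pr = rd[THEN conjunct2, THEN conjunct2, THEN conjunct1]
  note inX0 = rd[THEN conjunct2, THEN conjunct2, THEN conjunct2, THEN conjunct2, THEN conjunct1]
  note stp0 = rd[THEN conjunct2, THEN conjunct2, THEN conjunct2, THEN conjunct2, THEN conjunct2]
  have inX: "\<And>w i. w \<in> space M \<Longrightarrow> i \<ge> 1 \<Longrightarrow> x i w \<in> X" using inX0 by blast
  have step: "is_argmax_on X (ucb Psi l (beta t) (\<lambda>i. x i w) (\<lambda>i. f (x i w) + eps i w) t) (x (Suc t) w)"
    if "w \<in> space M" "t \<ge> T0" "q t w" for w t
  proof -
    from stp0 that have "let xs = (\<lambda>i. x i w); ys = (\<lambda>i. f (x i w) + eps i w) in
         if q t w then is_argmax_on X (ucb Psi l (beta t) xs ys t) (x (Suc t) w)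
         else is_argmax_on X (kreg Psi l xs ys t) (x (Suc t) w)" by blast
    then show ?thesis using that by (simp add: Let_def)
  qed
  obtain N0 where N0: "\<forall>S. finite S \<longrightarrow> S \<subseteq> X \<longrightarrow> (\<forall>a\<in>S. \<forall>b\<in>S. a \<noteq> b \<longrightarrow> d*l \<le> dist a b) \<longrightarrow> card S \<le> N0"
    using sep_bound[OF X, of "d*l"] d l by auto
  have AEinf: "AE w in M. \<forall>n::nat. \<exists>t\<ge>n. q t w"
  proof (subst AE_all_countable, intro allI)
    fix n :: nat
    define B where "B m = {w\<in>space M. \<forall>t\<in>{max n T0..<max n T0+m}. \<not> q t w}" for m
    have Bf: "B m \<in> sets M \<and> measure M (B m) = (1-p)^m" for m
    proof -
      have "{max n T0..<max n T0+m} \<subseteq> {T0..}" by auto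
      from noq_prob[OF ps ind pr _ this] show ?thesis unfolding B_def by simp
    qed
    show "AE w in M. \<exists>t\<ge>n. q t w"
    proof (rule AE_small[OF ps])
      show "B m \<in> sets M" for m using Bf by blast
    next
      fix e :: real assume "e > 0"
      then obtain m where "(1-p)^m < e" using real_arch_pow_inv[of e "1-p"] p by auto
      then show "\<exists>m. measure M (B m) < e" using Bf by auto
    next
      fix m show "{w\<in>space M. \<not> (\<exists>t\<ge>n. q t w)} \<subseteq> B m" unfolding B_def by auto
    qed
  qed
  from AEinf AE_space show "AE w in M. (INF t\<in>{1..}. fill_distance X (\<lambda>i. x i w) t) \<le> R_Psi * l"
  proof eventually_elim
    case (elim w)
    let ?xs = "\<lambda>i. x i w"
    have inXw: "\<And>i. i \<ge> 1 \<Longrightarrow> ?xs i \<in> X" using inX elim(2) by auto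
    show ?case
    proof (rule ccontr)
      assume "\<not> (INF t\<in>{1..}. fill_distance X ?xs t) \<le> R_Psi * l"
      then have gt: "R_Psi * l < (INF t\<in>{1..}. fill_distance X ?xs t)" by simp
      have bb: "bdd_below ((\<lambda>t. fill_distance X ?xs t) ` {1..})"
        using fill_bdd(2)[OF X] inXw by (intro bdd_belowI2[of _ 0]) auto
      have fillgt: "R_Psi * l < fill_distance X ?xs t" if "t \<ge> 1" for t
      proof -
        have "(INF t\<in>{1..}. fill_distance X ?xs t) \<le> fill_distance X ?xs t"
          using bb that by (intro cINF_lower) auto
        then show ?thesis using gt by simp
      qed
      have sep: "\<forall>i\<in>{1..t}. d * l \<le> dist (?xs (Suc t)) (?xs i)" if "t \<in> {t. T0 \<le> t \<and> q t w}" for t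
      proof -
        from that have t: "t \<ge> T0" "q t w" by auto
        show ?thesis
        proof (rule key_step[OF X Psi0 supp d(2) l beta])
          show "1 \<le> t" using t T0 by simp
          show "\<And>i. i \<in> {1..t} \<Longrightarrow> ?xs i \<in> X" using inXw by auto
          show "is_argmax_on X (ucb Psi l (beta t) ?xs (\<lambda>i. f (x i w) + eps i w) t) (?xs (Suc t))"
            using step[OF elim(2) t] by simp
          show "R_Psi * l < fill_distance X ?xs t" using fillgt t T0 by simp
        qed
      qed
      have "infinite {t. T0 \<le> t \<and> q t w}"
        unfolding infinite_nat_iff_unbounded_le
      proof
        fix m
        obtain t where "t \<ge> max m T0" "q t w" using elim(1) by blast
        then show "\<exists>n\<ge>m. n \<in> {t. T0 \<le> t \<and> q t w}" by auto
      qed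
      then obtain T where T: "finite T" "card T = Suc N0" "T \<subseteq> {t. T0 \<le> t \<and> q t w}"
        using infinite_arbitrarily_large by blast
      have "card T \<le> N0"
      proof (rule count_bound[OF N0 _ T(1)])
        show "0 < d * l" using d l by simp
        show "\<And>t. t \<in> T \<Longrightarrow> \<forall>i\<in>{1..t}. d * l \<le> dist (?xs (Suc t)) (?xs i)" using sep T(3) by blast
        show "\<And>t. t \<in> T \<Longrightarrow> ?xs (Suc t) \<in> X" using inXw by simp
      qed
      then show False using T(2) by simp
    qed
  qed
qed


lemma part2:
  fixes X :: "'a::euclidean_space set"
    and f :: "'a \<Rightarrow> real"
    and Psi :: "'a \<Rightarrow> real"
    and R_Psi vs p d :: real
    and beta :: "nat \<Rightarrow> real"
    and T0 :: nat
  assumes X: "compact X"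
    and Psi0: "\<And>z. Psi z \<ge> 0" and supp: "closure {z. Psi z \<noteq> 0} \<subseteq> ball 0 R_Psi"
    and R: "R_Psi > 0"
    and d: "d > 0" "\<And>y. norm y < d \<Longrightarrow> Psi y > 0"
    and p: "0 < p" "p \<le> 1"
    and T0: "T0 \<ge> 1"
    and beta: "\<And>t. beta t > 0"
  shows
     "\<exists>l::nat \<Rightarrow> real. (\<forall>t. l t > 0) \<and> l \<longlonglongrightarrow> 0 \<and>
       (\<forall>(M::'w measure) q eps x.
          boke_plus_run M X f Psi vs p beta l T0 q eps x \<longrightarrow>
          (AE w in M. (INF t\<in>{1..}. fill_distance X (\<lambda>i. x i w) t) = 0))"
proof -
  define e where "e k = d / (real k + 1)" for k :: nat
  have e_pos: "e k > 0" for k unfolding e_def using d by simp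
  define Nb where "Nb k = (SOME N. \<forall>S. finite S \<longrightarrow> S \<subseteq> X \<longrightarrow> (\<forall>a\<in>S. \<forall>b\<in>S. a \<noteq> b \<longrightarrow> e k \<le> dist a b) \<longrightarrow> card S \<le> N)" for k
  have Nb: "\<forall>S. finite S \<longrightarrow> S \<subseteq> X \<longrightarrow> (\<forall>a\<in>S. \<forall>b\<in>S. a \<noteq> b \<longrightarrow> e k \<le> dist a b) \<longrightarrow> card S \<le> Nb k" for k
    unfolding Nb_def by (rule someI_ex) (rule sep_bound[OF X e_pos])
  define eps0 where "eps0 k = 1 / ((real k + 1) * (real (Nb k) + 1))" for k
  have eps0: "eps0 k > 0" for k unfolding eps0_def by simp
  define mb where "mb k = Suc (SOME m. (1-p)^m < eps0 k)" for k
  have mb: "(real (Nb k) + 1) * (1-p)^(mb k) < 1 / (real k + 1)" for k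
  proof -
    have "\<exists>m. (1-p)^m < eps0 k" using real_arch_pow_inv[OF eps0] p by auto
    then have a: "(1-p)^(SOME m. (1-p)^m < eps0 k) < eps0 k" by (rule someI_ex)
    have "(1-p)^(mb k) \<le> (1-p)^(SOME m. (1-p)^m < eps0 k)"
      unfolding mb_def using p by (intro power_decreasing) auto
    then have "(1-p)^(mb k) < eps0 k" using a by linarith
    then have "(real (Nb k) + 1) * (1-p)^(mb k) < (real (Nb k) + 1) * eps0 k"
      by (intro mult_strict_left_mono) auto
    also have "\<dots> = 1 / (real k + 1)" unfolding eps0_def by (simp add: field_simps) (smt (verit) of_nat_0_le_iff mult_nonneg_nonneg)
    finally show ?thesis .
  qed
  have mb1: "mb k \<ge> 1" for k unfolding mb_def by simp
  define s where "s = rec_nat T0 (\<lambda>k sk. sk + Suc (Nb k) * mb k)"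
  have s0: "s 0 = T0" and sS: "s (Suc k) = s k + Suc (Nb k) * mb k" for k unfolding s_def by simp_all
  have smono: "strict_mono s"
  proof (rule strict_monoI_Suc)
    fix k have "Suc (Nb k) * mb k \<ge> 1" using mb1[of k] by simp
    then show "s k < s (Suc k)" using sS[of k] by linarith
  qed
  have sT0: "s k \<ge> T0" for k using s0 strict_mono_less_eq[OF smono, of 0 k] by simp
  define blk where "blk t = card {k. s (Suc k) \<le> t}" for t
  define lt where "lt t = 1 / (real (blk t) + 1)" for t
  have fin: "finite {k. s (Suc k) \<le> t}" for t
  proof (rule finite_subset[of _ "{..<t}"])
    show "{k. s (Suc k) \<le> t} \<subseteq> {..<t}"
      using strict_mono_imp_increasing[OF smono] by (auto dest: spec[of _ "Suc _"]) (metis Suc_le_eq le_trans)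
  qed simp
  have blk_eq: "blk t = k" if "s k \<le> t" "t < s (Suc k)" for t k
  proof -
    have "{j. s (Suc j) \<le> t} = {..<k}"
    proof (intro set_eqI iffI)
      fix j assume "j \<in> {j. s (Suc j) \<le> t}"
      then have "s (Suc j) < s (Suc k)" using that by simp
      then have "Suc j < Suc k" using strict_mono_less[OF smono] by blast
      then show "j \<in> {..<k}" by simp
    next
      fix j assume "j \<in> {..<k}"
      then have "s (Suc j) \<le> s k" using strict_mono_less_eq[OF smono] by simp
      then show "j \<in> {j. s (Suc j) \<le> t}" using that by simp
    qed
    then show ?thesis unfolding blk_def by simp
  qed
  have blk_ge: "blk t \<ge> Suc k" if "s (Suc k) \<le> t" for t k
  proof -
    have "{..k} \<subseteq> {j. s (Suc j) \<le> t}"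
    proof
      fix j assume "j \<in> {..k}"
      then have "s (Suc j) \<le> s (Suc k)" using strict_mono_less_eq[OF smono] by simp
      then show "j \<in> {j. s (Suc j) \<le> t}" using that by simp
    qed
    then have "card {..k} \<le> blk t" unfolding blk_def using fin by (intro card_mono) auto
    then show ?thesis by simp
  qed
  have lt_pos: "\<forall>t. lt t > 0" unfolding lt_def by simp
  have lt_lim: "lt \<longlonglongrightarrow> 0"
  proof (rule LIMSEQ_I)
    fix r :: real assume "r > 0"
    then obtain k where k: "1 / r < real k" using reals_Archimedean2 by blast
    then have kr: "1 / (real k + 1) < r" using \<open>r > 0\<close>
      by (simp add: divide_less_eq field_simps)
    show "\<exists>no. \<forall>n\<ge>no. norm (lt n - 0) < r"
    proof (intro exI allI impI)
      fix n assume "s (Suc k) \<le> n"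
      then have "real (blk n) + 1 \<ge> real k + 1" using blk_ge[of k n] by simp
      then have "lt n \<le> 1 / (real k + 1)" unfolding lt_def by (intro divide_left_mono) auto
      moreover have "lt n > 0" using lt_pos by simp
      ultimately show "norm (lt n - 0) < r" using kr by simp
    qed
  qed
  show ?thesis
  proof (intro exI[of _ lt] conjI)
    show "\<forall>t. lt t > 0" by (rule lt_pos)
    show "lt \<longlonglongrightarrow> 0" by (rule lt_lim)
    show "\<forall>(M::'w measure) q eps x.
          boke_plus_run M X f Psi vs p beta lt T0 q eps x \<longrightarrow>
          (AE w in M. (INF t\<in>{1..}. fill_distance X (\<lambda>i. x i w) t) = 0)"
    proof (intro allI impI)
    fix M :: "'w measure" and q eps and x :: "nat \<Rightarrow> 'w \<Rightarrow> 'a"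
    assume run: "boke_plus_run M X f Psi vs p beta lt T0 q eps x"
    note rd = run[unfolded boke_plus_run_def]
    note ps = rd[THEN conjunct1]
    interpret prob_space M by fact
    note ind = rd[THEN conjunct2, THEN conjunct1]
    note pr = rd[THEN conjunct2, THEN conjunct2, THEN conjunct1]
    note inX0 = rd[THEN conjunct2, THEN conjunct2, THEN conjunct2, THEN conjunct2, THEN conjunct1]
    note stp0 = rd[THEN conjunct2, THEN conjunct2, THEN conjunct2, THEN conjunct2, THEN conjunct2]
    have inX: "\<And>w i. w \<in> space M \<Longrightarrow> i \<ge> 1 \<Longrightarrow> x i w \<in> X" using inX0 by blast
    have step: "is_argmax_on X (ucb Psi (lt t) (beta t) (\<lambda>i. x i w) (\<lambda>i. f (x i w) + eps i w) t) (x (Suc t) w)"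
      if "w \<in> space M" "t \<ge> T0" "q t w" for w t
    proof -
      from stp0 that have "let xs = (\<lambda>i. x i w); ys = (\<lambda>i. f (x i w) + eps i w) in
           if q t w then is_argmax_on X (ucb Psi (lt t) (beta t) xs ys t) (x (Suc t) w)
           else is_argmax_on X (kreg Psi (lt t) xs ys t) (x (Suc t) w)" by blast
      then show ?thesis using that by (simp add: Let_def)
    qed
    define J where "J k r = {s k + r * mb k..<s k + Suc r * mb k}" for k r
    have Jsub: "J k r \<subseteq> {s k..<s (Suc k)}" if "r < Suc (Nb k)" for k r
    proof -
      have "Suc r * mb k \<le> Suc (Nb k) * mb k" using that by (intro mult_right_mono) auto
      then show ?thesis unfolding J_def using sS[of k] by auto
    qed
    have Jcard: "card (J k r) = mb k" for k r unfolding J_def by simp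
    define good where "good k w \<longleftrightarrow> (\<forall>r<Suc (Nb k). \<exists>t\<in>J k r. q t w)" for k w
    define F where "F k = (\<Union>r<Suc (Nb k). {w\<in>space M. \<forall>t\<in>J k r. \<not> q t w})" for k
    have Fr: "{w\<in>space M. \<forall>t\<in>J k r. \<not> q t w} \<in> sets M \<and> measure M {w\<in>space M. \<forall>t\<in>J k r. \<not> q t w} = (1-p)^mb k"
      if "r < Suc (Nb k)" for k r
    proof -
      have "J k r \<subseteq> {T0..}" using Jsub[OF that] sT0[of k] by auto
      from noq_prob[OF ps ind pr _ this] show ?thesis unfolding J_def using Jcard[of k r] J_def by simp
    qed
    have Fs: "F k \<in> sets M" for k unfolding F_def by (rule sets.finite_UN) (use Fr in auto)
    have Fm: "measure M (F k) < 1 / (real k + 1)" for k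
    proof -
      have "measure M (F k) \<le> (\<Sum>r<Suc (Nb k). measure M {w\<in>space M. \<forall>t\<in>J k r. \<not> q t w})"
        unfolding F_def by (rule measure_UNION_le) (use Fr in auto)
      also have "\<dots> = (\<Sum>r<Suc (Nb k). (1-p)^mb k)" by (rule sum.cong) (use Fr in auto)
      also have "\<dots> = (real (Nb k) + 1) * (1-p)^(mb k)" by simp
      also have "\<dots> < 1 / (real k + 1)" by (rule mb)
      finally show ?thesis .
    qed
    have AEgood: "AE w in M. \<forall>K::nat. \<exists>k\<ge>K. good k w"
    proof (subst AE_all_countable, intro allI)
      fix K :: nat
      show "AE w in M. \<exists>k\<ge>K. good k w"
      proof (rule AE_small[OF ps, of "\<lambda>j. F (K + j)"])
        show "F (K + j) \<in> sets M" for j by (rule Fs)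
      next
        fix r :: real assume "r > 0"
        then obtain j where j: "1 / r < real j" using reals_Archimedean2 by blast
        then have jr: "1 / (real j + 1) < r" using \<open>r > 0\<close>
          by (simp add: divide_less_eq field_simps)
        have "1 / (real (K + j) + 1) \<le> 1 / (real j + 1)" by (intro divide_left_mono) auto
        then show "\<exists>j. measure M (F (K + j)) < r" using Fm[of "K+j"] jr by (intro exI[of _ j]) linarith
      next
        fix j show "{w\<in>space M. \<not> (\<exists>k\<ge>K. good k w)} \<subseteq> F (K + j)"
        proof
          fix w assume "w \<in> {w\<in>space M. \<not> (\<exists>k\<ge>K. good k w)}"
          then have "w \<in> space M" "\<not> good (K+j) w" by auto
          then show "w \<in> F (K+j)" unfolding F_def good_def by auto
        qed
      qed
    qed
    from AEgood AE_space show "AE w in M. (INF t\<in>{1..}. fill_distance X (\<lambda>i. x i w) t) = 0"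
    proof eventually_elim
      case (elim w)
      let ?xs = "\<lambda>i. x i w"
      have inXw: "\<And>i. i \<ge> 1 \<Longrightarrow> ?xs i \<in> X" using inX elim(2) by auto
      have fnn: "fill_distance X ?xs t \<ge> 0" if "t \<ge> 1" for t
        using fill_bdd(2)[OF X that] inXw by auto
      have bb: "bdd_below ((\<lambda>t. fill_distance X ?xs t) ` {1..})"
        using fnn by (intro bdd_belowI2[of _ 0]) auto
      have ge0: "(INF t\<in>{1..}. fill_distance X ?xs t) \<ge> 0"
        using fnn by (intro cINF_greatest) auto
      show ?case
      proof (rule ccontr)
        define c where "c = (INF t\<in>{1..}. fill_distance X ?xs t)"
        assume "\<not> (INF t\<in>{1..}. fill_distance X ?xs t) = 0"
        then have cpos: "c > 0" using ge0 unfolding c_def by simp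
        have fillge: "c \<le> fill_distance X ?xs t" if "t \<ge> 1" for t
          unfolding c_def using bb that by (intro cINF_lower) auto
        obtain K where K: "R_Psi / c < real K" using reals_Archimedean2 by blast
        obtain k where k: "k \<ge> K" "good k w" using elim(1) by blast
        have Rk: "R_Psi / (real k + 1) < c"
        proof -
          have "R_Psi < c * real K" using K cpos by (simp add: divide_less_eq mult.commute)
          also have "\<dots> \<le> c * (real k + 1)" using k(1) cpos by (intro mult_left_mono) auto
          finally show ?thesis by (simp add: divide_less_eq mult.commute)
        qed
        define tr where "tr r = (SOME t. t \<in> J k r \<and> q t w)" for r
        have tr: "tr r \<in> J k r \<and> q (tr r) w" if "r < Suc (Nb k)" for r
        proof -
          have "\<exists>t. t \<in> J k r \<and> q t w" using k(2) that unfolding good_def by blast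
          then show ?thesis unfolding tr_def by (rule someI_ex)
        qed
        define T where "T = tr ` {..<Suc (Nb k)}"
        have inj: "inj_on tr {..<Suc (Nb k)}"
        proof (rule inj_onI, rule ccontr)
          have lt: "tr r1 < tr r2" if "r1 < r2" "r2 < Suc (Nb k)" for r1 r2
          proof -
            have "tr r1 < s k + Suc r1 * mb k" using tr[of r1] that unfolding J_def by auto
            also have "\<dots> \<le> s k + r2 * mb k" using that by (intro add_left_mono mult_right_mono) auto
            also have "\<dots> \<le> tr r2" using tr[of r2] that unfolding J_def by auto
            finally show ?thesis .
          qed
          fix r1 r2 assume "r1 \<in> {..<Suc (Nb k)}" "r2 \<in> {..<Suc (Nb k)}" "tr r1 = tr r2" "r1 \<noteq> r2"
          then show False using lt[of r1 r2] lt[of r2 r1] by (cases "r1 < r2") auto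
        qed
        have cardT: "card T = Suc (Nb k)" unfolding T_def using card_image[OF inj] by simp
        have Tprops: "s k \<le> t \<and> t < s (Suc k) \<and> q t w" if "t \<in> T" for t
        proof -
          from that obtain r where r: "r < Suc (Nb k)" "t = tr r" unfolding T_def by auto
          then show ?thesis using tr[OF r(1)] Jsub[OF r(1)] by auto
        qed
        have "card T \<le> Nb k"
        proof (rule count_bound[OF Nb e_pos])
          show "finite T" unfolding T_def by simp
          show "\<And>t. t \<in> T \<Longrightarrow> ?xs (Suc t) \<in> X" using inXw by simp
          fix t assume tT: "t \<in> T"
          have t: "s k \<le> t" "t < s (Suc k)" "q t w" using Tprops[OF tT] by auto
          have tT0: "t \<ge> T0" using t(1) sT0[of k] by simp
          have ltt: "lt t = 1 / (real k + 1)" unfolding lt_def using blk_eq[OF t(1) t(2)] by simp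
          have "\<forall>i\<in>{1..t}. d * lt t \<le> dist (?xs (Suc t)) (?xs i)"
          proof (rule key_step[OF X Psi0 supp d(2) _ beta])
            show "0 < lt t" using lt_pos by simp
            show "1 \<le> t" using tT0 T0 by simp
            show "\<And>i. i \<in> {1..t} \<Longrightarrow> ?xs i \<in> X" using inXw by auto
            show "is_argmax_on X (ucb Psi (lt t) (beta t) ?xs (\<lambda>i. f (x i w) + eps i w) t) (?xs (Suc t))"
              using step[OF elim(2) tT0 t(3)] by simp
            have "R_Psi * lt t = R_Psi / (real k + 1)" using ltt by simp
            also have "\<dots> < c" by (rule Rk)
            also have "\<dots> \<le> fill_distance X ?xs t" using fillge tT0 T0 by simp
            finally show "R_Psi * lt t < fill_distance X ?xs t" .
          qed
          moreover have "d * lt t = e k" unfolding e_def ltt by simp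
          ultimately show "\<forall>i\<in>{1..t}. e k \<le> dist (?xs (Suc t)) (?xs i)" by simp
        qed
        then show False using cardT by simp
      qed
    qed
  qed
  qed
qed

theorem mainTheorem5:
  fixes X :: "'a::euclidean_space set"
    and f :: "'a \<Rightarrow> real"
    and Psi :: "'a \<Rightarrow> real"
    and R_Psi M_Psi vs p :: real
    and beta :: "nat \<Rightarrow> real"
    and T0 :: nat
  assumes A1: "compact X" "convex X" "interior X \<noteq> {}"
    and A2: "continuous_on X f"
    and A3: "\<And>z. Psi z \<ge> 0" "closure {z. Psi z \<noteq> 0} \<subseteq> ball 0 R_Psi"
            "isCont Psi 0" "Psi 0 > 0" "\<And>z. Psi z \<le> M_Psi"
    and A4: "vs \<ge> 0"
    and p: "0 < p" "p \<le> 1"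
    and T0: "T0 \<ge> 1"
    and beta: "\<And>t. beta t > 0" "filterlim beta at_top sequentially"
  shows
    "(\<forall>l::real. l > 0 \<longrightarrow>
       (\<forall>(M::'w measure) q eps x.
          boke_plus_run M X f Psi vs p beta (\<lambda>_. l) T0 q eps x \<longrightarrow>
          (AE w in M. (INF t\<in>{1..}. fill_distance X (\<lambda>i. x i w) t) \<le> R_Psi * l)))
     \<and>
     (\<exists>l::nat \<Rightarrow> real. (\<forall>t. l t > 0) \<and> l \<longlonglongrightarrow> 0 \<and>
       (\<forall>(M::'w measure) q eps x.
          boke_plus_run M X f Psi vs p beta l T0 q eps x \<longrightarrow>
          (AE w in M. (INF t\<in>{1..}. fill_distance X (\<lambda>i. x i w) t) = 0)))"
proof -
  have R: "R_Psi > 0"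
  proof -
    have "0 \<in> {z. Psi z \<noteq> 0}" using A3(4) by simp
    then have "0 \<in> closure {z. Psi z \<noteq> 0}" by (rule subsetD[OF closure_subset])
    then have "(0::'a) \<in> ball 0 R_Psi" by (rule subsetD[OF A3(2)])
    then show ?thesis by simp
  qed
  obtain d where d: "d > 0" "\<And>y. norm y < d \<Longrightarrow> Psi y > 0"
  proof -
    have "continuous (at 0) Psi" using A3(3) by simp
    then have "\<exists>dd>0. \<forall>y. dist y 0 < dd \<longrightarrow> dist (Psi y) (Psi 0) < Psi 0"
      unfolding continuous_at_eps_delta using A3(4) by blast
    then obtain dd where dd: "dd > 0" "\<forall>y. dist y 0 < dd \<longrightarrow> dist (Psi y) (Psi 0) < Psi 0" by blast
    have "Psi y > 0" if "norm y < dd" for y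
    proof -
      have "dist (Psi y) (Psi 0) < Psi 0" using dd(2) that by simp
      then show ?thesis by (simp add: dist_real_def abs_less_iff)
    qed
    then show ?thesis using that dd(1) by blast
  qed
  show ?thesis
  proof (rule conjI)
    show "\<forall>l::real. l > 0 \<longrightarrow>
       (\<forall>(M::'w measure) q eps x.
          boke_plus_run M X f Psi vs p beta (\<lambda>_. l) T0 q eps x \<longrightarrow>
          (AE w in M. (INF t\<in>{1..}. fill_distance X (\<lambda>i. x i w) t) \<le> R_Psi * l))"
      by (rule part1[OF A1(1) A3(1) A3(2) d p T0 beta(1)])
    show "\<exists>l::nat \<Rightarrow> real. (\<forall>t. l t > 0) \<and> l \<longlonglongrightarrow> 0 \<and>
       (\<forall>(M::'w measure) q eps x.
          boke_plus_run M X f Psi vs p beta l T0 q eps x \<longrightarrow>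
          (AE w in M. (INF t\<in>{1..}. fill_distance X (\<lambda>i. x i w) t) = 0))"
      by (rule part2[OF A1(1) A3(1) A3(2) R d p T0 beta(1)])
  qed
qed

end
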